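(* There is an absolute constant $C$ such that the following holds. Let $\mathcal P$ be an uncertain point set in $\mathbb R^d$, $\varepsilon>0$, $\delta\in(0,1)$, and $T=\{z_1,\dots,z_m\}\subset\mathbb R^d$ a finite set such that for every traversal $Q$ the chosen median $m_Q$ is $\frac{\varepsilon}{1+\varepsilon}$-covered by some point of $T$. Let $\hat w_i=\Pr_Q[f_T(m_Q)=z_i]$ for $Q$ a uniformly random traversal. Draw $N\ge \frac{C}{\varepsilon^2}(d+\log\frac1\delta)$ independent uniformly random traversals $Q_1,\dots,Q_N$ and let $c_i=\frac1N|\{t: f_T(m_{Q_t})=z_i\}|$. Then $$\Pr\Big[\max_{1\le i\le m}|c_i-\hat w_i|\le\varepsilon\Big]>1-\delta.$$
   Context: Each uncertain point $P_i$ ($i=1,\dots,n$) has $k$ equally likely locations $p_{i,1},\dots,p_{i,k}\in\mathbb R^d$; a uniformly random traversal picks independently for each $i$ a uniformly random location $q_i$ of $P_i$. $\mathrm{cost}(p,Q)=\frac1n\sum_i\|p-q_i\|$; an $L_1$ median of $Q$ minimizes $\mathrm{cost}(\cdot,Q)$; $Q\mapsto m_Q$ is a fixed rule selecting one $L_1$ median of each traversal. $\widehat{\mathrm{cost}}(x)=\frac1n\sum_i\min_j\|x-p_{i,j}\|$. A point $z$ $\gamma$-covers $q$ if $\|z-q\|\le\gamma\,\widehat{\mathrm{cost}}(z)$. $f_T(q)$ is the point $z\in T$ minimizing $\|q-z\|$ among those $z\in T$ that $\frac{\varepsilon}{1+\varepsilon}$-cover $q$, ties broken by lexicographically smallest coordinates.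 *)

theory Defs
  imports "HOL-Probability.Probability"
begin

text \<open>Points of R^d are represented as real lists of length d (so that the
  dimension d can be quantified inside the statement, after the absolute constant).\<close>

definition edist :: "real list \<Rightarrow> real list \<Rightarrow> real" where
  "edist x y = sqrt (\<Sum>l<length x. (x ! l - y ! l)^2)"

text \<open>An uncertain point set: P i j is the j-th location of the i-th point (i < n, j < k).
  A traversal is encoded by its choice function sigma (sigma i < k); its points are pts P sigma.\<close>

definition traversals :: "nat \<Rightarrow> nat \<Rightarrow> (nat \<Rightarrow> nat) set" where
  "traversals n k = PiE {..<n} (\<lambda>_. {..<k})"

definition pts :: "(nat \<Rightarrow> nat \<Rightarrow> real list) \<Rightarrow> (nat \<Rightarrow> nat) \<Rightarrow> nat \<Rightarrow> real list" where
  "pts P \<sigma> = (\<lambda>i. P i (\<sigma> i))"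

definition cost :: "nat \<Rightarrow> (nat \<Rightarrow> real list) \<Rightarrow> real list \<Rightarrow> real" where
  "cost n Q p = (1 / real n) * (\<Sum>i<n. edist p (Q i))"

definition is_L1_median :: "nat \<Rightarrow> nat \<Rightarrow> (nat \<Rightarrow> real list) \<Rightarrow> real list \<Rightarrow> bool" where
  "is_L1_median d n Q m \<longleftrightarrow> length m = d \<and> (\<forall>p. length p = d \<longrightarrow> cost n Q m \<le> cost n Q p)"

definition cost_hat :: "nat \<Rightarrow> nat \<Rightarrow> (nat \<Rightarrow> nat \<Rightarrow> real list) \<Rightarrow> real list \<Rightarrow> real" where
  "cost_hat n k P x = (1 / real n) * (\<Sum>i<n. Min ((\<lambda>j. edist x (P i j)) ` {..<k}))"

definition covers :: "nat \<Rightarrow> nat \<Rightarrow> (nat \<Rightarrow> nat \<Rightarrow> real list) \<Rightarrow> real \<Rightarrow> real list \<Rightarrow> real list \<Rightarrow> bool" where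
  "covers n k P \<gamma> z q \<longleftrightarrow> edist z q \<le> \<gamma> * cost_hat n k P z"

definition lex_less :: "real list \<Rightarrow> real list \<Rightarrow> bool" where
  "lex_less x y \<longleftrightarrow> (\<exists>l<length x. x ! l < y ! l \<and> (\<forall>l'<l. x ! l' = y ! l'))"

definition lex_le :: "real list \<Rightarrow> real list \<Rightarrow> bool" where
  "lex_le x y \<longleftrightarrow> x = y \<or> lex_less x y"

definition fT :: "nat \<Rightarrow> nat \<Rightarrow> (nat \<Rightarrow> nat \<Rightarrow> real list) \<Rightarrow> real \<Rightarrow> real list set \<Rightarrow> real list \<Rightarrow> real list" where
  "fT n k P \<epsilon> T q =
     (let S = {z\<in>T. covers n k P (\<epsilon> / (1 + \<epsilon>)) z q};
          M = {z\<in>S. \<forall>z'\<in>S. edist q z \<le> edist q z'}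
      in THE z. z \<in> M \<and> (\<forall>z'\<in>M. lex_le z z'))"

end

theory Submission
  imports Defs
begin

lemma sum_exp_count:
  fixes \<Omega> :: "'a set" and g :: "'a \<Rightarrow> 'b"
  assumes fin: "finite \<Omega>"
  shows "(\<Sum>Qs\<in>PiE {..<N} (\<lambda>_. \<Omega>). exp (\<mu> * real (card {t\<in>{..<N}. g (Qs t) = z})))
         = (real (card \<Omega>) + real (card {\<omega>\<in>\<Omega>. g \<omega> = z}) * (exp \<mu> - 1)) ^ N"
proof -
  have e: "exp (\<mu> * real (card {t\<in>{..<N}. g (Qs t) = z})) = (\<Prod>t\<in>{..<N}. (if g (Qs t) = z then exp \<mu> else 1))" for Qs
  proof -
    have "(\<Prod>t\<in>{..<N}. (if g (Qs t) = z then exp \<mu> else 1)) = (\<Prod>t\<in>{t\<in>{..<N}. g (Qs t) = z}. exp \<mu>)"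
      using prod.inter_filter[of "{..<N}" "\<lambda>_. exp \<mu>" "\<lambda>t. g (Qs t) = z"] by simp
    also have "\<dots> = exp \<mu> ^ card {t\<in>{..<N}. g (Qs t) = z}" by simp
    also have "\<dots> = exp (real (card {t\<in>{..<N}. g (Qs t) = z}) * \<mu>)" by (simp add: exp_of_nat_mult)
    finally show ?thesis by (simp add: mult.commute)
  qed
  have "(\<Sum>Qs\<in>PiE {..<N} (\<lambda>_. \<Omega>). \<Prod>t\<in>{..<N}. (if g (Qs t) = z then exp \<mu> else 1))
      = (\<Prod>t\<in>{..<N}. \<Sum>\<omega>\<in>\<Omega>. (if g \<omega> = z then exp \<mu> else 1))"
    using prod_sum_PiE[of "{..<N}" "\<lambda>_. \<Omega>" "\<lambda>t \<omega>. (if g \<omega> = z then exp \<mu> else (1::real))"] fin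
    by simp
  also have "\<dots> = (\<Sum>\<omega>\<in>\<Omega>. (if g \<omega> = z then exp \<mu> else 1)) ^ N" by simp
  also have "(\<Sum>\<omega>\<in>\<Omega>. (if g \<omega> = z then exp \<mu> else 1)) = real (card {\<omega>\<in>\<Omega>. g \<omega> = z}) * exp \<mu> + real (card {\<omega>\<in>\<Omega>. g \<omega> \<noteq> z})"
    using fin by (simp add: sum.If_cases Int_def)
  also have "real (card {\<omega>\<in>\<Omega>. g \<omega> \<noteq> z}) = real (card \<Omega>) - real (card {\<omega>\<in>\<Omega>. g \<omega> = z})"
  proof -
    have "{\<omega>\<in>\<Omega>. g \<omega> \<noteq> z} = \<Omega> - {\<omega>\<in>\<Omega>. g \<omega> = z}" by blast
    then have "card {\<omega>\<in>\<Omega>. g \<omega> \<noteq> z} = card \<Omega> - card {\<omega>\<in>\<Omega>. g \<omega> = z}"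
      using fin by (simp add: card_Diff_subset)
    moreover have "card {\<omega>\<in>\<Omega>. g \<omega> = z} \<le> card \<Omega>" using fin by (intro card_mono) auto
    ultimately show ?thesis by simp
  qed
  finally have "(\<Sum>Qs\<in>PiE {..<N} (\<lambda>_. \<Omega>). \<Prod>t\<in>{..<N}. (if g (Qs t) = z then exp \<mu> else 1))
      = (real (card {\<omega>\<in>\<Omega>. g \<omega> = z}) * exp \<mu> + (real (card \<Omega>) - real (card {\<omega>\<in>\<Omega>. g \<omega> = z}))) ^ N" .
  moreover have "real (card {\<omega>\<in>\<Omega>. g \<omega> = z}) * exp \<mu> + (real (card \<Omega>) - real (card {\<omega>\<in>\<Omega>. g \<omega> = z}))
     = real (card \<Omega>) + real (card {\<omega>\<in>\<Omega>. g \<omega> = z}) * (exp \<mu> - 1)" by (simp add: algebra_simps)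
  ultimately show ?thesis by (simp only: e)
qed

lemma tail_bound:
  fixes \<Omega> :: "'a set" and g :: "'a \<Rightarrow> 'b"
  assumes fin: "finite \<Omega>" and ne: "\<Omega> \<noteq> {}"
  shows "real (card {Qs\<in>PiE {..<N} (\<lambda>_. \<Omega>). b \<le> \<mu> * real (card {t\<in>{..<N}. g (Qs t) = z})})
          / real (card (PiE {..<N} (\<lambda>_. \<Omega>)))
     \<le> (1 + real (card {\<omega>\<in>\<Omega>. g \<omega> = z}) / real (card \<Omega>) * (exp \<mu> - 1))^N * exp (-b)"
proof -
  let ?\<Pi> = "PiE {..<N} (\<lambda>_. \<Omega>)"
  let ?c = "\<lambda>Qs. real (card {t\<in>{..<N}. g (Qs t) = z})"
  let ?S = "{Qs\<in>?\<Pi>. b \<le> \<mu> * ?c Qs}"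
  have fP: "finite ?\<Pi>" using fin by (simp add: finite_PiE)
  have cP: "card ?\<Pi> = card \<Omega> ^ N" using fin by (simp add: card_PiE)
  have pos: "real (card \<Omega>) > 0" using fin ne by (simp add: card_gt_0_iff)
  have "real (card ?S) = (\<Sum>Qs\<in>?S. 1)" by simp
  also have "\<dots> \<le> (\<Sum>Qs\<in>?S. exp (\<mu> * ?c Qs - b))"
    by (rule sum_mono) auto
  also have "\<dots> \<le> (\<Sum>Qs\<in>?\<Pi>. exp (\<mu> * ?c Qs - b))"
    by (rule sum_mono2) (use fP in auto)
  also have "\<dots> = (\<Sum>Qs\<in>?\<Pi>. exp (\<mu> * ?c Qs)) * exp (-b)"
    by (simp add: sum_distrib_right exp_diff exp_minus divide_inverse)
  also have "\<dots> = (real (card \<Omega>) + real (card {\<omega>\<in>\<Omega>. g \<omega> = z}) * (exp \<mu> - 1)) ^ N * exp (-b)"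
    by (rule arg_cong[where f="\<lambda>x. x * exp (-b)"], rule sum_exp_count[OF fin])
  finally have 1: "real (card ?S) \<le> (real (card \<Omega>) + real (card {\<omega>\<in>\<Omega>. g \<omega> = z}) * (exp \<mu> - 1)) ^ N * exp (-b)" .
  have "(real (card \<Omega>) + real (card {\<omega>\<in>\<Omega>. g \<omega> = z}) * (exp \<mu> - 1)) ^ N
      = real (card \<Omega>) ^ N * (1 + real (card {\<omega>\<in>\<Omega>. g \<omega> = z}) / real (card \<Omega>) * (exp \<mu> - 1))^N"
    using pos by (simp add: power_mult_distrib[symmetric] field_simps)
  with 1 have 2: "real (card ?S) \<le> real (card \<Omega>) ^ N * ((1 + real (card {\<omega>\<in>\<Omega>. g \<omega> = z}) / real (card \<Omega>) * (exp \<mu> - 1))^N * exp (-b))"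
    by (simp only: mult.assoc)
  have 3: "real (card ?\<Pi>) = real (card \<Omega>) ^ N" using cP by simp
  have 4: "real (card \<Omega>) ^ N > 0" using pos by simp
  show ?thesis unfolding 3 using 2 4 by (subst pos_divide_le_eq) (auto simp: mult.commute)
qed

lemma key_exp:
  fixes a q :: real
  assumes a: "1 \<le> a" and q: "0 < q" "q \<le> 1"
  shows "exp (- a / q) \<le> q * exp (- a)"
proof -
  have "ln (1/q) \<le> 1/q - 1" using q by (intro ln_le_minus_one) auto
  hence l: "1 - 1/q \<le> ln q" using q by (simp add: ln_div)
  have "1/q \<ge> 1" using q by simp
  hence "(a - 1) * (1 - 1/q) \<le> 0" using a by (intro mult_nonneg_nonpos) auto
  moreover have "a * (1 - 1/q) = (1 - 1/q) + (a - 1) * (1 - 1/q)" by (simp add: algebra_simps add_divide_distrib[symmetric])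
  ultimately have "a * (1 - 1/q) \<le> 1 - 1/q" by linarith
  moreover have "- a / q = a * (1 - 1/q) - a" using q by (simp add: field_simps)
  ultimately have "- a / q \<le> ln q + (-a)" using l by linarith
  hence "exp (- a / q) \<le> exp (ln q + (-a))" by simp
  also have "\<dots> = q * exp (-a)" using q by (simp only: exp_add exp_ln)
  finally show ?thesis .
qed

lemma exp_neg_bound:
  fixes m :: real assumes "0 \<le> m"
  shows "exp (- m) \<le> 1 - m + m^2"
proof -
  have "1 + m \<le> exp m" by simp
  hence "exp (-m) \<le> 1 / (1 + m)" using assms by (simp add: exp_minus divide_simps)
  also have "\<dots> \<le> 1 - m + m^2"
  proof -
    have "1 \<le> (1 + m) * (1 - m + m^2)" using assms by (simp add: algebra_simps power2_eq_square power3_eq_cube)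
    thus ?thesis using assms by (simp add: divide_simps, simp add: mult.commute)
  qed
  finally show ?thesis .
qed

lemma lower_real:
  fixes q \<epsilon> N :: real
  assumes q: "0 < q" "q \<le> 1" and e: "0 < \<epsilon>" "\<epsilon> < q" and N: "4 \<le> N * \<epsilon>^2"
  shows "exp (N * q * (exp (- (\<epsilon> / (2*q))) - 1) + (\<epsilon> / (2*q)) * N * (q - \<epsilon>)) \<le> q * exp (- (N * \<epsilon>^2 / 4))"
proof -
  let ?m = "\<epsilon> / (2*q)"
  have m0: "0 \<le> ?m" using q e by simp
  have N0: "N \<ge> 0" using N e by (smt (verit) mult_nonpos_nonneg zero_le_power2)
  have "N * q * (exp (- ?m) - 1) \<le> N * q * (- ?m + ?m^2)"
    using exp_neg_bound[OF m0] N0 q by (intro mult_left_mono) auto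
  hence "N * q * (exp (- ?m) - 1) + ?m * N * (q - \<epsilon>) \<le> N * q * (- ?m + ?m^2) + ?m * N * (q - \<epsilon>)" by simp
  also have "\<dots> = - (N * \<epsilon>^2 / 4) / q" using q by (simp add: field_simps power2_eq_square)
  finally have "exp (N * q * (exp (- ?m) - 1) + ?m * N * (q - \<epsilon>)) \<le> exp (- (N * \<epsilon>^2 / 4) / q)" by simp
  also have "\<dots> \<le> q * exp (- (N * \<epsilon>^2 / 4))"
    using key_exp[of "N * \<epsilon>^2 / 4" q] N q by simp
  finally show ?thesis .
qed

lemma upper_real:
  fixes q \<epsilon> N :: real
  assumes q: "0 < q" "q \<le> 1" and e: "0 < \<epsilon>" "\<epsilon> < 1" and N: "4 \<le> N * \<epsilon>^2"
  shows "\<exists>\<mu>\<ge>0. exp (N * q * (exp \<mu> - 1) - \<mu> * N * (q + \<epsilon>))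
           \<le> q * (exp (- (N * \<epsilon>^2 / 4)) + (2 * exp 1 / \<epsilon>) * exp (- (N * \<epsilon> / 2)))"
proof -
  have N0: "N \<ge> 0" using N e by (smt (verit) mult_nonpos_nonneg zero_le_power2)
  have "N * \<epsilon>^2 \<le> N * \<epsilon>" using N0 e by (intro mult_left_mono) (auto simp: power2_eq_square)
  hence Ne: "N * \<epsilon> \<ge> 4" using N by linarith
  have T1: "0 \<le> q * exp (- (N * \<epsilon>^2 / 4))" using q by simp
  have T2: "0 \<le> q * ((2 * exp 1 / \<epsilon>) * exp (- (N * \<epsilon> / 2)))" using q e by simp
  let ?R = "q * (exp (- (N * \<epsilon>^2 / 4)) + (2 * exp 1 / \<epsilon>) * exp (- (N * \<epsilon> / 2)))"
  have R: "?R = q * exp (- (N * \<epsilon>^2 / 4)) + q * ((2 * exp 1 / \<epsilon>) * exp (- (N * \<epsilon> / 2)))"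
    by (simp add: distrib_left)
  consider "\<epsilon> / 2 \<le> q" | "\<epsilon> / (2 * exp 1) < q" "q < \<epsilon> / 2" | "q \<le> \<epsilon> / (2 * exp 1)" by linarith
  then show ?thesis
  proof cases
    case 1
    let ?m = "\<epsilon> / (2*q)"
    have m0: "0 \<le> ?m" using q e by simp
    have m1: "?m \<le> 1" using 1 q by (simp add: divide_simps)
    have "N * q * (exp ?m - 1) \<le> N * q * (?m + ?m^2)"
      using exp_bound[OF m0 m1] N0 q by (intro mult_left_mono) auto
    hence "N * q * (exp ?m - 1) - ?m * N * (q + \<epsilon>) \<le> N * q * (?m + ?m^2) - ?m * N * (q + \<epsilon>)" by simp
    also have "\<dots> = - (N * \<epsilon>^2 / 4) / q" using q by (simp add: field_simps power2_eq_square)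
    finally have "exp (N * q * (exp ?m - 1) - ?m * N * (q + \<epsilon>)) \<le> exp (- (N * \<epsilon>^2 / 4) / q)" by simp
    also have "\<dots> \<le> q * exp (- (N * \<epsilon>^2 / 4))"
      using key_exp[of "N * \<epsilon>^2 / 4" q] N q by simp
    finally show ?thesis using m0 R T2 by (intro exI[of _ ?m]) auto
  next
    case 2
    have e3: "exp 1 \<le> (3::real)" by (rule exp_le)
    have "q * (exp 1 - 2) \<le> q * 1" using q e3 by (intro mult_left_mono) auto
    hence "N * (q * (exp 1 - 2)) \<le> N * (\<epsilon> / 2)" using 2 N0 by (intro mult_left_mono) auto
    hence "N * q * (exp 1 - 1) - 1 * N * (q + \<epsilon>) \<le> - (N * \<epsilon> / 2)" by (simp add: algebra_simps)
    hence "exp (N * q * (exp 1 - 1) - 1 * N * (q + \<epsilon>)) \<le> exp (- (N * \<epsilon> / 2))" by simp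
    also have "\<dots> \<le> (q * (2 * exp 1 / \<epsilon>)) * exp (- (N * \<epsilon> / 2))"
    proof -
      have "1 \<le> q * (2 * exp 1 / \<epsilon>)" using 2 e by (simp add: field_simps)
      hence "1 * exp (- (N * \<epsilon> / 2)) \<le> (q * (2 * exp 1 / \<epsilon>)) * exp (- (N * \<epsilon> / 2))"
        by (intro mult_right_mono) auto
      thus ?thesis by (simp only: mult_1)
    qed
    finally show ?thesis using R T1 by (intro exI[of _ 1]) (auto simp: mult.assoc)
  next
    case 3
    let ?m = "ln (\<epsilon> / (2*q))"
    let ?l = "ln (\<epsilon> / (2 * exp 1 * q))"
    have l0: "0 \<le> ?l" using 3 q e by (simp add: field_simps)
    have ml: "?m = 1 + ?l"
    proof -
      have "\<epsilon> / (2*q) = exp 1 * (\<epsilon> / (2 * exp 1 * q))" by (simp add: field_simps)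
      moreover have "ln (exp 1 * (\<epsilon> / (2 * exp 1 * q))) = ln (exp 1) + ln (\<epsilon> / (2 * exp 1 * q))"
        using q e by (intro ln_mult_pos) auto
      ultimately show ?thesis by simp
    qed
    have m0: "0 \<le> ?m" using ml l0 by simp
    have em: "exp ?m = \<epsilon> / (2*q)" using q e by simp
    have "N * q * (exp ?m - 1) - ?m * N * (q + \<epsilon>) = N * \<epsilon> / 2 - N * q - ?m * N * q - ?m * (N * \<epsilon>)"
      unfolding em using q by (simp add: field_simps)
    also have "\<dots> \<le> N * \<epsilon> / 2 - ?m * (N * \<epsilon>)"
    proof -
      have "0 \<le> ?m * N * q" using N0 q m0 by simp
      moreover have "0 \<le> N * q" using N0 q by simp
      ultimately show ?thesis by linarith
    qed
    also have "\<dots> = - (N * \<epsilon> / 2) - ?l * (N * \<epsilon>)" unfolding ml by (simp add: algebra_simps)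
    also have "\<dots> \<le> - (N * \<epsilon> / 2) - ?l"
    proof -
      have "?l * 1 \<le> ?l * (N * \<epsilon>)" using l0 Ne by (intro mult_left_mono) auto
      thus ?thesis by simp
    qed
    finally have "exp (N * q * (exp ?m - 1) - ?m * N * (q + \<epsilon>)) \<le> exp (- (N * \<epsilon> / 2) - ?l)" by simp
    also have "\<dots> = exp (- (N * \<epsilon> / 2)) * (2 * exp 1 * q / \<epsilon>)"
      using q e by (simp add: exp_diff)
    also have "\<dots> = q * ((2 * exp 1 / \<epsilon>) * exp (- (N * \<epsilon> / 2)))" by simp
    finally show ?thesis using R T1 m0 by (intro exI[of _ ?m]) auto
  qed
qed

lemma pow_le_exp:
  fixes x :: real assumes "0 \<le> 1 + x"
  shows "(1 + x) ^ N \<le> exp (real N * x)"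
proof -
  have "(1 + x) ^ N \<le> exp x ^ N" using assms by (intro power_mono) auto
  also have "\<dots> = exp (real N * x)" by (simp add: exp_of_nat_mult)
  finally show ?thesis .
qed

lemma dev_split:
  fixes c q \<epsilon> N :: real
  assumes N: "N > 0" and h: "\<not> \<bar>c / N - q\<bar> \<le> \<epsilon>"
  shows "N * (q + \<epsilon>) < c \<or> c < N * (q - \<epsilon>)"
proof -
  have "\<epsilon> < \<bar>c / N - q\<bar>" using h by simp
  hence "q + \<epsilon> < c / N \<or> c / N < q - \<epsilon>" by linarith
  thus ?thesis using N by (auto simp: pos_less_divide_eq pos_divide_less_eq mult.commute)
qed

lemma per_z:
  fixes \<Omega> :: "'a set" and g :: "'a \<Rightarrow> 'b"
  assumes fin: "finite \<Omega>" and ne: "\<Omega> \<noteq> {}" and e: "0<\<epsilon>" "\<epsilon><1" and N: "4 \<le> real N * \<epsilon>^2"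
  shows "real (card {Qs\<in>PiE {..<N} (\<lambda>_. \<Omega>). \<not> \<bar>real (card {t\<in>{..<N}. g (Qs t) = z}) / real N
             - real (card {\<omega>\<in>\<Omega>. g \<omega> = z}) / real (card \<Omega>)\<bar> \<le> \<epsilon>})
         / real (card (PiE {..<N} (\<lambda>_. \<Omega>)))
     \<le> (real (card {\<omega>\<in>\<Omega>. g \<omega> = z}) / real (card \<Omega>)) *
        (2 * exp (-(real N*\<epsilon>^2/4)) + (2*exp 1/\<epsilon>) * exp (-(real N*\<epsilon>/2)))"
proof -
  define q where "q = real (card {\<omega>\<in>\<Omega>. g \<omega> = z}) / real (card \<Omega>)"
  define K where "K = 2 * exp (-(real N*\<epsilon>^2/4)) + (2*exp 1/\<epsilon>) * exp (-(real N*\<epsilon>/2))"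
  let ?\<Pi> = "PiE {..<N} (\<lambda>_. \<Omega>)"
  let ?c = "\<lambda>Qs. real (card {t\<in>{..<N}. g (Qs t) = z})"
  let ?F = "{Qs\<in>?\<Pi>. \<not> \<bar>?c Qs / real N - q\<bar> \<le> \<epsilon>}"
  have fP: "finite ?\<Pi>" using fin by (simp add: finite_PiE)
  have neP: "?\<Pi> \<noteq> {}" using ne by (simp add: PiE_eq_empty_iff)
  have cP: "real (card ?\<Pi>) > 0" using fP neP by (simp add: card_gt_0_iff)
  have pos: "real (card \<Omega>) > 0" using fin ne by (simp add: card_gt_0_iff)
  have q0: "0 \<le> q" unfolding q_def by (intro divide_nonneg_nonneg) auto
  have "card {\<omega>\<in>\<Omega>. g \<omega> = z} \<le> card \<Omega>" using fin by (intro card_mono) auto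
  hence q1: "q \<le> 1" unfolding q_def using pos by (simp add: divide_le_eq_1)
  have "N \<noteq> 0"
  proof
    assume "N = 0" with N show False by simp
  qed
  hence Npos: "real N > 0" by simp
  have K0: "0 \<le> K" unfolding K_def using e by simp
  have main: "real (card ?F) / real (card ?\<Pi>) \<le> q * K"
  proof (cases "q = 0")
    case True
    hence "card {\<omega>\<in>\<Omega>. g \<omega> = z} = 0" unfolding q_def using pos by simp
    hence em: "{\<omega>\<in>\<Omega>. g \<omega> = z} = {}" using fin by simp
    have all: "\<bar>?c Qs / real N - q\<bar> \<le> \<epsilon>" if Qs: "Qs \<in> ?\<Pi>" for Qs
    proof -
      have "{t\<in>{..<N}. g (Qs t) = z} = {}" using Qs em by (auto simp: PiE_def Pi_def)
      hence "?c Qs = 0" by simp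
      thus ?thesis using True e by (simp only: div_0 diff_zero abs_zero)
    qed
    hence "?F = {}" by blast
    thus ?thesis using True by (simp only: card.empty of_nat_0 div_0 mult_zero_left order_refl)
  next
    case False
    hence qp: "0 < q" using q0 by simp
    obtain \<mu> where mu0: "\<mu> \<ge> 0" and mu: "exp (real N * q * (exp \<mu> - 1) - \<mu> * real N * (q + \<epsilon>))
           \<le> q * (exp (- (real N * \<epsilon>^2 / 4)) + (2 * exp 1 / \<epsilon>) * exp (- (real N * \<epsilon> / 2)))"
      using upper_real[OF qp q1 e N] by blast
    let ?U = "{Qs\<in>?\<Pi>. \<mu> * (real N * (q + \<epsilon>)) \<le> \<mu> * ?c Qs}"
    have U: "real (card ?U) / real (card ?\<Pi>) \<le> q * (exp (- (real N * \<epsilon>^2 / 4)) + (2 * exp 1 / \<epsilon>) * exp (- (real N * \<epsilon> / 2)))"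
    proof -
      have "real (card ?U) / real (card ?\<Pi>) \<le> (1 + q * (exp \<mu> - 1))^N * exp (- (\<mu> * (real N * (q + \<epsilon>))))"
        using tail_bound[where b="\<mu> * (real N * (q + \<epsilon>))" and \<mu>=\<mu> and g=g and z=z and N=N, OF fin ne] by (simp only: q_def)
      also have "\<dots> \<le> exp (real N * (q * (exp \<mu> - 1))) * exp (- (\<mu> * (real N * (q + \<epsilon>))))"
        using q0 mu0 by (intro mult_right_mono pow_le_exp) auto
      also have "\<dots> = exp (real N * q * (exp \<mu> - 1) - \<mu> * real N * (q + \<epsilon>))"
        by (subst exp_add[symmetric], rule arg_cong[where f=exp], simp add: algebra_simps)
      finally show ?thesis using mu by linarith
    qed
    have FU: "{Qs\<in>?\<Pi>. real N * (q + \<epsilon>) < ?c Qs} \<subseteq> ?U"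
    proof safe
      fix Qs assume "Qs \<in> ?\<Pi>" "real N * (q + \<epsilon>) < ?c Qs"
      thus "\<mu> * (real N * (q + \<epsilon>)) \<le> \<mu> * ?c Qs" using mu0 by (intro mult_left_mono) auto
    qed
    show ?thesis
    proof (cases "\<epsilon> < q")
      case True
      define m where "m = \<epsilon> / (2*q)"
      have m0: "0 \<le> m" unfolding m_def using qp e by simp
      let ?L = "{Qs\<in>?\<Pi>. (-m) * (real N * (q - \<epsilon>)) \<le> (-m) * ?c Qs}"
      have L: "real (card ?L) / real (card ?\<Pi>) \<le> q * exp (- (real N * \<epsilon>^2 / 4))"
      proof -
        have "real (card ?L) / real (card ?\<Pi>) \<le> (1 + q * (exp (-m) - 1))^N * exp (- ((-m) * (real N * (q - \<epsilon>))))"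
          using tail_bound[where b="(-m) * (real N * (q - \<epsilon>))" and \<mu>="-m" and g=g and z=z and N=N, OF fin ne] by (simp only: q_def)
        also have "\<dots> \<le> exp (real N * (q * (exp (-m) - 1))) * exp (- ((-m) * (real N * (q - \<epsilon>))))"
        proof (intro mult_right_mono pow_le_exp)
          have "q * (-1) \<le> q * (exp (-m) - 1)" using qp by (intro mult_left_mono) auto
          hence "-q \<le> q * (exp (-m) - 1)" by simp
          thus "0 \<le> 1 + q * (exp (- m) - 1)" using q1 by linarith
        qed auto
        also have "\<dots> = exp (real N * q * (exp (- m) - 1) + m * real N * (q - \<epsilon>))"
          by (subst exp_add[symmetric], rule arg_cong[where f=exp], simp add: algebra_simps)
        also have "\<dots> \<le> q * exp (- (real N * \<epsilon>^2 / 4))"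
          using lower_real[OF qp q1 e(1) True N] unfolding m_def .
        finally show ?thesis .
      qed
      have FL: "{Qs\<in>?\<Pi>. ?c Qs < real N * (q - \<epsilon>)} \<subseteq> ?L"
      proof safe
        fix Qs assume "Qs \<in> ?\<Pi>" "?c Qs < real N * (q - \<epsilon>)"
        hence "m * ?c Qs \<le> m * (real N * (q - \<epsilon>))" using m0 by (intro mult_left_mono) auto
        thus "(-m) * (real N * (q - \<epsilon>)) \<le> (-m) * ?c Qs" by simp
      qed
      have "?F \<subseteq> {Qs\<in>?\<Pi>. real N * (q + \<epsilon>) < ?c Qs} \<union> {Qs\<in>?\<Pi>. ?c Qs < real N * (q - \<epsilon>)}"
      proof safe
        fix Qs assume "Qs \<in> ?\<Pi>" "\<not> \<bar>?c Qs / real N - q\<bar> \<le> \<epsilon>" "\<not> ?c Qs < real N * (q - \<epsilon>)"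
        thus "real N * (q + \<epsilon>) < ?c Qs" using dev_split[OF Npos] by blast
      qed
      hence "?F \<subseteq> ?U \<union> ?L" using FU FL by blast
      hence "card ?F \<le> card (?U \<union> ?L)" using fP by (intro card_mono) auto
      also have "\<dots> \<le> card ?U + card ?L" by (rule card_Un_le)
      finally have "real (card ?F) \<le> real (card ?U) + real (card ?L)" by linarith
      hence "real (card ?F) / real (card ?\<Pi>) \<le> real (card ?U) / real (card ?\<Pi>) + real (card ?L) / real (card ?\<Pi>)"
        using cP by (simp add: add_divide_distrib[symmetric] divide_right_mono)
      also have "\<dots> \<le> q * K"
      proof -
        have "q * (exp (- (real N * \<epsilon>^2 / 4)) + (2 * exp 1 / \<epsilon>) * exp (- (real N * \<epsilon> / 2)))
              + q * exp (- (real N * \<epsilon>^2 / 4)) = q * K" unfolding K_def by (simp add: algebra_simps)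
        thus ?thesis using U L by linarith
      qed
      finally show ?thesis .
    next
      case False
      have "?F \<subseteq> {Qs\<in>?\<Pi>. real N * (q + \<epsilon>) < ?c Qs}"
      proof safe
        fix Qs assume "Qs \<in> ?\<Pi>" and h: "\<not> \<bar>?c Qs / real N - q\<bar> \<le> \<epsilon>"
        have c0: "0 \<le> ?c Qs" by simp
        from dev_split[OF Npos h] have "real N * (q + \<epsilon>) < ?c Qs \<or> ?c Qs < real N * (q - \<epsilon>)" .
        moreover have "real N * (q - \<epsilon>) \<le> 0" using False Npos by (simp add: mult_nonneg_nonpos)
        ultimately show "real N * (q + \<epsilon>) < ?c Qs" using c0 by linarith
      qed
      hence "card ?F \<le> card ?U" using fP FU by (intro card_mono) auto
      hence "real (card ?F) / real (card ?\<Pi>) \<le> real (card ?U) / real (card ?\<Pi>)"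
        using cP by (simp add: divide_right_mono)
      also have "\<dots> \<le> q * (exp (- (real N * \<epsilon>^2 / 4)) + (2 * exp 1 / \<epsilon>) * exp (- (real N * \<epsilon> / 2)))"
        by (rule U)
      also have "\<dots> \<le> q * K"
      proof -
        have "exp (- (real N * \<epsilon>^2 / 4)) + (2 * exp 1 / \<epsilon>) * exp (- (real N * \<epsilon> / 2)) \<le> K"
          unfolding K_def by simp
        thus ?thesis using q0 by (intro mult_left_mono) auto
      qed
      finally show ?thesis .
    qed
  qed
  show ?thesis using main by (simp only: q_def K_def)
qed

lemma K_small:
  fixes \<epsilon> \<delta> N :: real
  assumes e: "0<\<epsilon>" "\<epsilon><1" and d: "0<\<delta>" "\<delta><1" and N: "100 * (1 + ln (1/\<delta>)) \<le> N * \<epsilon>^2"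
  shows "2 * exp (-(N*\<epsilon>^2/4)) + (2*exp 1/\<epsilon>) * exp (-(N*\<epsilon>/2)) < \<delta>"
proof -
  define L where "L = ln (1/\<delta>)"
  have L0: "0 < L" unfolding L_def using d by simp
  have eL: "exp (-L) = \<delta>" unfolding L_def using d by (simp add: ln_div)
  have "exp (-(N*\<epsilon>^2/4)) \<le> exp (-25 + (-L))" using N L0 unfolding L_def[symmetric] by simp
  also have "\<dots> = exp (-25) * \<delta>" by (simp only: exp_add eL)
  also have "exp (-25) \<le> (1/26::real)"
  proof -
    have "1 + 25 \<le> exp (25::real)" by (rule exp_ge_add_one_self)
    thus ?thesis by (simp add: exp_minus divide_simps)
  qed
  hence "exp (-25) * \<delta> \<le> 1/26 * \<delta>" using d by (intro mult_right_mono) auto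
  finally have t1: "exp (-(N*\<epsilon>^2/4)) \<le> \<delta> / 26" by simp
  have "0 < 100 * (1 + ln (1/\<delta>))" using L0 unfolding L_def by simp
  hence "0 < N * \<epsilon>^2" using N by linarith
  hence N0: "0 < N" using e by (simp add: zero_less_mult_iff)
  have s1: "N * \<epsilon> / 2 = (N * \<epsilon>^2) / (2*\<epsilon>)" using e by (simp add: power2_eq_square)
  have s2: "(N * \<epsilon>^2) / (2*\<epsilon>) \<ge> 100 * (1 + L) / (2*\<epsilon>)" using N e unfolding L_def by (intro divide_right_mono) auto
  have s3: "100 * (1 + L) / (2*\<epsilon>) = 50 / \<epsilon> + 50 * L / \<epsilon>" using e by (simp add: field_simps)
  have "1 \<le> 1/\<epsilon>" using e by simp
  hence "50 * L * 1 \<le> 50 * L * (1/\<epsilon>)" using L0 by (intro mult_left_mono) auto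
  hence s4: "L \<le> 50 * L / \<epsilon>" using L0 by simp
  have "-(N*\<epsilon>/2) \<le> -(50/\<epsilon>) + (-L)" using s1 s2 s3 s4 by linarith
  hence "exp (-(N*\<epsilon>/2)) \<le> exp (-(50/\<epsilon>) + (-L))" by (simp only: exp_le_cancel_iff)
  also have "\<dots> = exp (-(50/\<epsilon>)) * \<delta>" by (simp only: exp_add eL)
  finally have "exp (-(N*\<epsilon>/2)) \<le> exp (-(50/\<epsilon>)) * \<delta>" .
  hence "(2*exp 1/\<epsilon>) * exp (-(N*\<epsilon>/2)) \<le> (2*exp 1/\<epsilon>) * (exp (-(50/\<epsilon>)) * \<delta>)"
    using e by (intro mult_left_mono) auto
  also have "(2*exp 1/\<epsilon>) * exp (-(50/\<epsilon>)) \<le> 6 / 50"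
  proof -
    have "1 + 50/\<epsilon> \<le> exp (50/\<epsilon>)" by (rule exp_ge_add_one_self)
    hence a: "exp (-(50/\<epsilon>)) \<le> 1 / (1 + 50/\<epsilon>)" using e by (simp add: exp_minus divide_simps mult.commute)
    have "(2*exp 1/\<epsilon>) * exp (-(50/\<epsilon>)) \<le> (2*exp 1/\<epsilon>) * (1 / (1 + 50/\<epsilon>))"
      using e a by (intro mult_left_mono) auto
    also have "\<dots> = 2 * exp 1 / (\<epsilon> + 50)" using e by (simp add: field_simps)
    also have "\<dots> \<le> 2 * 3 / 50" using e exp_le by (intro frac_le) auto
    finally show ?thesis by simp
  qed
  hence "(2*exp 1/\<epsilon>) * (exp (-(50/\<epsilon>)) * \<delta>) \<le> 6/50 * \<delta>"
    using d by (simp only: mult.assoc[symmetric]) (intro mult_right_mono, auto)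
  finally have t2: "(2*exp 1/\<epsilon>) * exp (-(N*\<epsilon>/2)) \<le> 6/50 * \<delta>" .
  show ?thesis using t1 t2 d by linarith
qed

lemma abstract_main:
  fixes \<Omega> :: "'a set" and g :: "'a \<Rightarrow> 'b"
  assumes fin: "finite \<Omega>" and ne: "\<Omega> \<noteq> {}" and fT: "finite T" and e: "0<\<epsilon>" "\<epsilon><1" and d: "0<\<delta>" "\<delta><1"
    and N: "100 * (1 + ln (1/\<delta>)) \<le> real N * \<epsilon>^2"
  shows "measure_pmf.prob (pmf_of_set (PiE {..<N} (\<lambda>_. \<Omega>)))
       {Qs. \<forall>z\<in>T. \<bar>real (card {t\<in>{..<N}. g (Qs t) = z}) / real N
           - measure_pmf.prob (pmf_of_set \<Omega>) {\<sigma>. g \<sigma> = z}\<bar> \<le> \<epsilon>} > 1 - \<delta>"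
proof -
  let ?\<Pi> = "PiE {..<N} (\<lambda>_. \<Omega>)"
  let ?c = "\<lambda>Qs z. real (card {t\<in>{..<N}. g (Qs t) = z})"
  define q where "q z = real (card {\<omega>\<in>\<Omega>. g \<omega> = z}) / real (card \<Omega>)" for z
  define K where "K = 2 * exp (-(real N*\<epsilon>^2/4)) + (2*exp 1/\<epsilon>) * exp (-(real N*\<epsilon>/2))"
  define F where "F z = {Qs\<in>?\<Pi>. \<not> \<bar>?c Qs z / real N - q z\<bar> \<le> \<epsilon>}" for z
  have fP: "finite ?\<Pi>" using fin by (simp add: finite_PiE)
  have neP: "?\<Pi> \<noteq> {}" using ne by (simp add: PiE_eq_empty_iff)
  have cP: "real (card ?\<Pi>) > 0" using fP neP by (simp add: card_gt_0_iff)
  have pos: "real (card \<Omega>) > 0" using fin ne by (simp add: card_gt_0_iff)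
  have qz: "measure_pmf.prob (pmf_of_set \<Omega>) {\<sigma>. g \<sigma> = z} = q z" for z
    using measure_pmf_of_set[OF ne fin, of "{\<sigma>. g \<sigma> = z}"] unfolding q_def by (simp add: Int_def)
  have L0: "0 < ln (1/\<delta>)" using d by simp
  have "4 \<le> 100 * (1 + ln (1/\<delta>))" using L0 by simp
  hence N4: "4 \<le> real N * \<epsilon>^2" using N by linarith
  have Fz: "real (card (F z)) / real (card ?\<Pi>) \<le> q z * K" for z
    using per_z[OF fin ne e N4, of g z] unfolding F_def q_def K_def .
  have Kd: "K < \<delta>" unfolding K_def using K_small[OF e d N] .
  have K0: "0 \<le> K" unfolding K_def using e by simp
  have sumq: "(\<Sum>z\<in>T. q z) \<le> 1"
  proof -
    have "(\<Sum>z\<in>T. card {\<omega>\<in>\<Omega>. g \<omega> = z}) = card (\<Union>z\<in>T. {\<omega>\<in>\<Omega>. g \<omega> = z})"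
      using fT fin by (intro card_UN_disjoint[symmetric]) auto
    also have "\<dots> \<le> card \<Omega>" using fin by (intro card_mono) auto
    finally have "real (\<Sum>z\<in>T. card {\<omega>\<in>\<Omega>. g \<omega> = z}) \<le> real (card \<Omega>)" by linarith
    hence "(\<Sum>z\<in>T. real (card {\<omega>\<in>\<Omega>. g \<omega> = z})) / real (card \<Omega>) \<le> 1"
      using pos by simp
    thus ?thesis unfolding q_def by (simp add: sum_divide_distrib)
  qed
  let ?G = "{Qs. \<forall>z\<in>T. \<bar>?c Qs z / real N - q z\<bar> \<le> \<epsilon>}"
  have "?\<Pi> - ?G = (\<Union>z\<in>T. F z)" unfolding F_def by auto
  hence "card (?\<Pi> - ?G) \<le> (\<Sum>z\<in>T. card (F z))" using card_UN_le[OF fT, of F] by simp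
  hence "real (card (?\<Pi> - ?G)) \<le> real (\<Sum>z\<in>T. card (F z))" by (simp only: of_nat_le_iff)
  hence "real (card (?\<Pi> - ?G)) \<le> (\<Sum>z\<in>T. real (card (F z)))" by (simp only: of_nat_sum)
  hence "real (card (?\<Pi> - ?G)) / real (card ?\<Pi>) \<le> (\<Sum>z\<in>T. real (card (F z))) / real (card ?\<Pi>)"
    using cP by (intro divide_right_mono) auto
  also have "\<dots> = (\<Sum>z\<in>T. real (card (F z)) / real (card ?\<Pi>))" by (simp add: sum_divide_distrib)
  also have "\<dots> \<le> (\<Sum>z\<in>T. q z * K)" by (intro sum_mono Fz)
  also have "\<dots> = (\<Sum>z\<in>T. q z) * K" by (simp add: sum_distrib_right)
  also have "\<dots> \<le> 1 * K" using sumq K0 by (intro mult_right_mono) auto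
  finally have bad: "real (card (?\<Pi> - ?G)) / real (card ?\<Pi>) < \<delta>" using Kd by linarith
  have "card ((?\<Pi> \<inter> ?G) \<union> (?\<Pi> - ?G)) = card (?\<Pi> \<inter> ?G) + card (?\<Pi> - ?G)"
    by (rule card_Un_disjoint) (use fP in auto)
  moreover have "(?\<Pi> \<inter> ?G) \<union> (?\<Pi> - ?G) = ?\<Pi>" by blast
  ultimately have "real (card (?\<Pi> \<inter> ?G)) = real (card ?\<Pi>) - real (card (?\<Pi> - ?G))" by simp
  hence "real (card (?\<Pi> \<inter> ?G)) / real (card ?\<Pi>) = (real (card ?\<Pi>) - real (card (?\<Pi> - ?G))) / real (card ?\<Pi>)"
    by (simp only:)
  also have "\<dots> = 1 - real (card (?\<Pi> - ?G)) / real (card ?\<Pi>)" using cP by (simp add: diff_divide_distrib)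
  finally have "real (card (?\<Pi> \<inter> ?G)) / real (card ?\<Pi>) = 1 - real (card (?\<Pi> - ?G)) / real (card ?\<Pi>)" .
  hence "measure_pmf.prob (pmf_of_set ?\<Pi>) ?G > 1 - \<delta>"
    using measure_pmf_of_set[OF neP fP, of ?G] bad by linarith
  thus ?thesis by (simp only: qz)
qed

lemma prob_one:
  assumes fin: "finite S" and ne: "S \<noteq> {}" and all: "\<forall>x\<in>S. x \<in> G"
  shows "measure_pmf.prob (pmf_of_set S) G = 1"
proof -
  have "S \<inter> G = S" using all by blast
  moreover have "card S > 0" using fin ne by (simp add: card_gt_0_iff)
  ultimately show ?thesis using measure_pmf_of_set[OF ne fin, of G] by simp
qed

theorem mainTheorem8:
  shows "\<exists>C::real. \<forall>(d::nat) (n::nat) (k::nat) (P :: nat \<Rightarrow> nat \<Rightarrow> real list)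
           (med :: (nat \<Rightarrow> real list) \<Rightarrow> real list) (\<epsilon>::real) (\<delta>::real)
           (T :: real list set) (N::nat).
     0 < n \<longrightarrow> 0 < k \<longrightarrow>
     (\<forall>i<n. \<forall>j<k. length (P i j) = d) \<longrightarrow>
     (\<forall>\<sigma>\<in>traversals n k. is_L1_median d n (pts P \<sigma>) (med (pts P \<sigma>))) \<longrightarrow>
     0 < \<epsilon> \<longrightarrow> 0 < \<delta> \<longrightarrow> \<delta> < 1 \<longrightarrow>
     finite T \<longrightarrow> (\<forall>z\<in>T. length z = d) \<longrightarrow>
     (\<forall>\<sigma>\<in>traversals n k. \<exists>z\<in>T. covers n k P (\<epsilon> / (1 + \<epsilon>)) z (med (pts P \<sigma>))) \<longrightarrow>
     real N \<ge> C / \<epsilon>^2 * (real d + ln (1 / \<delta>)) \<longrightarrow>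
     measure_pmf.prob (pmf_of_set (PiE {..<N} (\<lambda>_. traversals n k)))
       {Qs. \<forall>z\<in>T.
          \<bar>real (card {t\<in>{..<N}. fT n k P \<epsilon> T (med (pts P (Qs t))) = z}) / real N
           - measure_pmf.prob (pmf_of_set (traversals n k))
               {\<sigma>. fT n k P \<epsilon> T (med (pts P \<sigma>)) = z}\<bar> \<le> \<epsilon>}
     > 1 - \<delta>"
proof (intro exI[of _ 100] allI impI)
  fix d n k :: nat and P :: "nat \<Rightarrow> nat \<Rightarrow> real list" and med :: "(nat \<Rightarrow> real list) \<Rightarrow> real list"
    and \<epsilon> \<delta> :: real and T :: "real list set" and N :: nat
  assume k: "0 < k" and medh: "\<forall>\<sigma>\<in>traversals n k. is_L1_median d n (pts P \<sigma>) (med (pts P \<sigma>))"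
    and e: "0 < \<epsilon>" and d0: "0 < \<delta>" and d1: "\<delta> < 1" and fT: "finite T"
    and Nh: "real N \<ge> 100 / \<epsilon>^2 * (real d + ln (1 / \<delta>))"
  define \<Omega> where "\<Omega> = traversals n k"
  define g where "g = (\<lambda>\<sigma>. fT n k P \<epsilon> T (med (pts P \<sigma>)))"
  let ?\<Pi> = "PiE {..<N} (\<lambda>_. \<Omega>)"
  let ?G = "{Qs. \<forall>z\<in>T. \<bar>real (card {t\<in>{..<N}. g (Qs t) = z}) / real N
           - measure_pmf.prob (pmf_of_set \<Omega>) {\<sigma>. g \<sigma> = z}\<bar> \<le> \<epsilon>}"
  have fin: "finite \<Omega>" unfolding \<Omega>_def traversals_def by (simp add: finite_PiE)
  have ne: "\<Omega> \<noteq> {}" unfolding \<Omega>_def traversals_def using k by (auto simp: PiE_eq_empty_iff lessThan_empty_iff)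
  have fP: "finite ?\<Pi>" using fin by (simp add: finite_PiE)
  have neP: "?\<Pi> \<noteq> {}" using ne by (simp add: PiE_eq_empty_iff)
  have L0: "0 < ln (1/\<delta>)" using d0 d1 by simp
  have goal: "measure_pmf.prob (pmf_of_set ?\<Pi>) ?G > 1 - \<delta>"
  proof (cases "1 \<le> \<epsilon>")
    case True
    have "\<forall>Qs\<in>?\<Pi>. Qs \<in> ?G"
    proof (intro ballI CollectI)
      fix Qs z assume "Qs \<in> ?\<Pi>" "z \<in> T"
      have "card {t\<in>{..<N}. g (Qs t) = z} \<le> card {..<N}" by (intro card_mono) auto
      hence c1: "real (card {t\<in>{..<N}. g (Qs t) = z}) \<le> real N" by simp
      have a0: "0 \<le> real (card {t\<in>{..<N}. g (Qs t) = z}) / real N" by simp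
      have a1: "real (card {t\<in>{..<N}. g (Qs t) = z}) / real N \<le> 1"
      proof (cases "N = 0")
        case False thus ?thesis using c1 by (simp add: divide_le_eq_1)
      qed simp
      have b0: "0 \<le> measure_pmf.prob (pmf_of_set \<Omega>) {\<sigma>. g \<sigma> = z}" by (rule measure_nonneg)
      have b1: "measure_pmf.prob (pmf_of_set \<Omega>) {\<sigma>. g \<sigma> = z} \<le> 1" by (rule measure_pmf.prob_le_1)
      show "\<bar>real (card {t\<in>{..<N}. g (Qs t) = z}) / real N
           - measure_pmf.prob (pmf_of_set \<Omega>) {\<sigma>. g \<sigma> = z}\<bar> \<le> \<epsilon>"
        using a0 a1 b0 b1 True by linarith
    qed
    thus ?thesis using prob_one[OF fP neP] d0 by simp
  next
    case False
    hence e1: "\<epsilon> < 1" by simp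
    show ?thesis
    proof (cases "d = 0")
      case True
      define g0 where "g0 = fT n k P \<epsilon> T []"
      have gc: "g \<sigma> = g0" if "\<sigma> \<in> \<Omega>" for \<sigma>
      proof -
        have "is_L1_median d n (pts P \<sigma>) (med (pts P \<sigma>))" using medh that unfolding \<Omega>_def by blast
        hence "length (med (pts P \<sigma>)) = 0" using True unfolding is_L1_median_def by simp
        thus ?thesis unfolding g_def g0_def by simp
      qed
      have "0 < 100 / \<epsilon>^2 * (real d + ln (1 / \<delta>))" using True L0 e by simp
      hence Npos: "0 < N" using Nh by linarith
      have "\<forall>Qs\<in>?\<Pi>. Qs \<in> ?G"
      proof (intro ballI CollectI)
        fix Qs z assume Qs: "Qs \<in> ?\<Pi>" and "z \<in> T"
        have inO: "Qs t \<in> \<Omega>" if "t < N" for t using Qs that by (auto simp: PiE_def Pi_def)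
        have qz: "measure_pmf.prob (pmf_of_set \<Omega>) {\<sigma>. g \<sigma> = z} = real (card (\<Omega> \<inter> {\<sigma>. g \<sigma> = z})) / real (card \<Omega>)"
          by (rule measure_pmf_of_set[OF ne fin])
        have cO: "real (card \<Omega>) > 0" using fin ne by (simp add: card_gt_0_iff)
        show "\<bar>real (card {t\<in>{..<N}. g (Qs t) = z}) / real N
           - measure_pmf.prob (pmf_of_set \<Omega>) {\<sigma>. g \<sigma> = z}\<bar> \<le> \<epsilon>"
        proof (cases "g0 = z")
          case True
          have "{t\<in>{..<N}. g (Qs t) = z} = {..<N}" using inO gc True by auto
          moreover have "\<Omega> \<inter> {\<sigma>. g \<sigma> = z} = \<Omega>" using gc True by auto
          ultimately show ?thesis using qz cO Npos e by simp
        next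
          case False
          have "{t\<in>{..<N}. g (Qs t) = z} = {}" using inO gc False by auto
          hence c: "real (card {t\<in>{..<N}. g (Qs t) = z}) = 0" by (simp only: card.empty of_nat_0)
          have "\<Omega> \<inter> {\<sigma>. g \<sigma> = z} = {}" using gc False by auto
          hence "measure_pmf.prob (pmf_of_set \<Omega>) {\<sigma>. g \<sigma> = z} = 0" using qz by simp
          thus ?thesis using c e by (simp only: div_0 diff_zero abs_zero less_imp_le)
        qed
      qed
      thus ?thesis using prob_one[OF fP neP] d0 by simp
    next
      case False
      have "real N * \<epsilon>^2 \<ge> 100 / \<epsilon>^2 * (real d + ln (1 / \<delta>)) * \<epsilon>^2"
        using Nh by (intro mult_right_mono) auto
      also have "100 / \<epsilon>^2 * (real d + ln (1 / \<delta>)) * \<epsilon>^2 = 100 * (real d + ln (1 / \<delta>))"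
        using e by simp
      finally have "100 * (real d + ln (1 / \<delta>)) \<le> real N * \<epsilon>^2" .
      moreover have "100 * (1 + ln (1 / \<delta>)) \<le> 100 * (real d + ln (1 / \<delta>))" using False by simp
      ultimately have N: "100 * (1 + ln (1 / \<delta>)) \<le> real N * \<epsilon>^2" by linarith
      show ?thesis using abstract_main[OF fin ne fT e e1 d0 d1 N, of g] .
    qed
  qed
  thus "measure_pmf.prob (pmf_of_set (PiE {..<N} (\<lambda>_. traversals n k)))
       {Qs. \<forall>z\<in>T.
          \<bar>real (card {t\<in>{..<N}. fT n k P \<epsilon> T (med (pts P (Qs t))) = z}) / real N
           - measure_pmf.prob (pmf_of_set (traversals n k))
               {\<sigma>. fT n k P \<epsilon> T (med (pts P \<sigma>)) = z}\<bar> \<le> \<epsilon>}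
     > 1 - \<delta>" unfolding g_def \<Omega>_def .
qed

end
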